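(* Let $(X,Y)\sim P_{XY}$ be a pair of random variables on finite alphabets $\mathcal{X}\times\mathcal{Y}$, and let $\varepsilon,\varepsilon_0,\varepsilon_1,\varepsilon_2,\varepsilon_3>0$ with $\varepsilon_0+\varepsilon_1+\varepsilon_2+\varepsilon_3\le\varepsilon$. (Lower bounds.) For every distributed encoding protocol $(e_{\mathcal X},e_{\mathcal Y},U)\in\Lambda_\varepsilon$ with codomains $\mathcal{C}_{\mathcal X},\mathcal{C}_{\mathcal Y}$, $$\log|\mathcal C_{\mathcal X}|\ge H_0^{\varepsilon}(X|Y),\qquad \log|\mathcal C_{\mathcal Y}|\ge H_0^{\varepsilon}(Y|X),\qquad \log|\mathcal C_{\mathcal X}|+\log|\mathcal C_{\mathcal Y}|\ge H_0^{\varepsilon}(X,Y).$$ (Achievability.) Let $\delta\ge 0$ be such that $\Pr\{(X,Y)\notin\mathcal{A}_\delta(P_{XY})\}\le\varepsilon_0$. Then for any finite sets $\mathcal C_{\mathcal X},\mathcal C_{\mathcal Y}$ satisfying $$\log|\mathcal C_{\mathcal X}|\ge \Xi^\delta_{\max}(P_{XY})-\Xi^\delta_{\min}(P_Y)-\log\varepsilon_1,$$ $$\log|\mathcal C_{\mathcal Y}|\ge \Xi^\delta_{\max}(P_{XY})-\Xi^\delta_{\min}(P_X)-\log\varepsilon_2,$$ $$\log|\mathcal C_{\mathcal X}|+\log|\mathcal C_{\mathcal Y}|\ge \Xi^\delta_{\max}(P_{XY})-\log\varepsilon_3,$$ there exists a distributed encoding protocol $(e_{\mathcal X},e_{\mathcal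 Y},U)\in\Lambda_\varepsilon$ with these codomains.
   Context: All logarithms are base 2; all random variables are discrete on finite alphabets. For a random variable $W$ on a finite alphabet $\mathcal W$, $H(W)$ is the Shannon entropy. Smooth entropies: for $\varepsilon\ge0$ and jointly distributed $(X,Y)$, the infima/suprema below range over pairs $(\bar X,\bar Y)$ defined on a common probability space with $(X,Y)$ such that $\Pr[(\bar X,\bar Y)\neq(X,Y)]\le\varepsilon$. $H_0^\varepsilon(X|Y):=\log\big[\inf_{(\bar X,\bar Y)}\max_{y}|\{x:P_{\bar X|\bar Y=y}(x)>0\}|\big]$; the unconditional versions are obtained with $Y$ trivial (constant). In particular $H_0^\varepsilon(X,Y)$ is $H_0^\varepsilon$ of the pair $W=(X,Y)$. $H_\infty^\delta(W):=-\log\big[\inf_{\bar W:\Pr[\bar W\neq W]\le\delta}\max_w P_{\bar W}(w)\big]$. $H_{-\infty}^\delta(W):=-\log\big[\sup_{\bar W:\Pr[\bar W\neq W]\le\delta}\min_{w:P_{\bar W}(w)>0}P_{\bar W}(w)\big]$. For a random variable $W$ on finite alphabet $\mathcal W$ and $\delta\ge0$: $\Xi^\delta_{\min}(P_W):=H(W)-|H(W)-H^\delta_\infty(W)|-\delta\log|\mathcal W|$ and $\Xi^\delta_{\max}(P_W):=H(W)+|H(W)-H^\delta_{-\infty}(W)|+\delta\log|\mathcal W|$ (for $W=(X,Y)$, $\mathcal W=\mathcal X\times\mathcal Y$). $\mathcal A_\delta(P_X):=\{x:\Xi^\delta_{\min}(P_X)\le-\log P_X(x)\le\Xi^\delta_{\max}(P_X)\}$,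 similarly $\mathcal A_\delta(P_Y)$, and $\mathcal A_\delta(P_{XY}):=\{(x,y):\Xi^\delta_{\min}(P_{XY})\le-\log P_{XY}(x,y)\le\Xi^\delta_{\max}(P_{XY}),\ x\in\mathcal A_\delta(P_X),\ y\in\mathcal A_\delta(P_Y)\}$. Distributed encoding protocols: for $0\le\varepsilon\le1$, $\Lambda_\varepsilon=\Lambda^P_\varepsilon(\mathcal X\times\mathcal Y\to\mathcal C_{\mathcal X}\times\mathcal C_{\mathcal Y})$ is the set of triples $(e_{\mathcal X},e_{\mathcal Y},U)$ where $U$ is a random variable with finite range $\mathcal U$, independent of $(X,Y)$ (shared randomness), $e_{\mathcal X}:\mathcal X\times\mathcal U\to\mathcal C_{\mathcal X}$, $e_{\mathcal Y}:\mathcal Y\times\mathcal U\to\mathcal C_{\mathcal Y}$, such that there exists a decoding function $g:\mathcal C_{\mathcal X}\times\mathcal C_{\mathcal Y}\times\mathcal U\to\mathcal X\times\mathcal Y$ with $\Pr\{g(e_{\mathcal X}(X,U),e_{\mathcal Y}(Y,U),U)\neq(X,Y)\}\le\varepsilon$. The encoding lengths are $\log|\mathcal C_{\mathcal X}|$ and $\log|\mathcal C_{\mathcal Y}|$. *)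

theory Defs
  imports "HOL-Probability.Probability"
begin

definition shannon_H :: "'w::finite pmf \<Rightarrow> real" where
  "shannon_H p = - (\<Sum>w\<in>UNIV. pmf p w * log 2 (pmf p w))"

text \<open>Couplings (W, W') of W ~ p with some W' on the same alphabet such that Pr[W' \<noteq> W] \<le> eps.
  The first component is the original W, the second the smoothed variable.\<close>
definition smooth_couplings :: "'w pmf \<Rightarrow> real \<Rightarrow> ('w \<times> 'w) pmf set" where
  "smooth_couplings p eps =
     {Q. map_pmf fst Q = p \<and> measure_pmf.prob Q {z. fst z \<noteq> snd z} \<le> eps}"

definition H0_smooth :: "'w::finite pmf \<Rightarrow> real \<Rightarrow> real" where
  "H0_smooth p eps =
     log 2 (real (INF Q\<in>smooth_couplings p eps. card (set_pmf (map_pmf snd Q))))"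

definition H0_cond_smooth :: "('a::finite \<times> 'b::finite) pmf \<Rightarrow> real \<Rightarrow> real" where
  "H0_cond_smooth p eps =
     log 2 (real (INF Q\<in>smooth_couplings p eps.
        Max ((\<lambda>y. card {x. pmf (map_pmf snd Q) (x, y) > 0}) ` UNIV)))"

definition Hinf_smooth :: "'w::finite pmf \<Rightarrow> real \<Rightarrow> real" where
  "Hinf_smooth p d =
     - log 2 (INF Q\<in>smooth_couplings p d. Max ((\<lambda>w. pmf (map_pmf snd Q) w) ` UNIV))"

definition Hneginf_smooth :: "'w::finite pmf \<Rightarrow> real \<Rightarrow> real" where
  "Hneginf_smooth p d =
     - log 2 (SUP Q\<in>smooth_couplings p d.
        Min {pmf (map_pmf snd Q) w | w. pmf (map_pmf snd Q) w > 0})"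

definition Xi_min :: "'w::finite pmf \<Rightarrow> real \<Rightarrow> real" where
  "Xi_min p d = shannon_H p - \<bar>shannon_H p - Hinf_smooth p d\<bar>
                - d * log 2 (real (card (UNIV :: 'w set)))"

definition Xi_max :: "'w::finite pmf \<Rightarrow> real \<Rightarrow> real" where
  "Xi_max p d = shannon_H p + \<bar>shannon_H p - Hneginf_smooth p d\<bar>
                + d * log 2 (real (card (UNIV :: 'w set)))"

text \<open>Typical set A_\<delta>(P_W). Symbols with probability 0 have -log P = +\<infinity> and are
  excluded explicitly (Isabelle's log 2 0 = 0 would otherwise misrepresent this).\<close>
definition typ_set :: "'w::finite pmf \<Rightarrow> real \<Rightarrow> 'w set" where
  "typ_set p d = {w. pmf p w > 0 \<and> Xi_min p d \<le> - log 2 (pmf p w)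
                       \<and> - log 2 (pmf p w) \<le> Xi_max p d}"

definition typ_set_joint :: "('x::finite \<times> 'y::finite) pmf \<Rightarrow> real \<Rightarrow> ('x \<times> 'y) set" where
  "typ_set_joint P d = {(x, y). (x, y) \<in> typ_set P d
        \<and> x \<in> typ_set (map_pmf fst P) d \<and> y \<in> typ_set (map_pmf snd P) d}"

text \<open>The shared randomness U has finite range,
  modelled as a distribution on nat with finite support; independence of U from (X,Y) is
  modelled by the product distribution.\<close>
definition in_Lambda ::
  "('x \<times> 'y) pmf \<Rightarrow> real \<Rightarrow> ('x \<Rightarrow> nat \<Rightarrow> 'cx) \<Rightarrow> ('y \<Rightarrow> nat \<Rightarrow> 'cy) \<Rightarrow> nat pmf \<Rightarrow> bool" where
  "in_Lambda P eps eX eY U \<longleftrightarrow> finite (set_pmf U) \<and>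
     (\<exists>g :: 'cx \<Rightarrow> 'cy \<Rightarrow> nat \<Rightarrow> 'x \<times> 'y.
        measure_pmf.prob (pair_pmf P U)
          {((x, y), u). g (eX x u) (eY y u) u \<noteq> (x, y)} \<le> eps)"

end

theory Submission
  imports Defs
begin


lemma card_coll:
  fixes a b :: "'a::finite"
  assumes "a \<noteq> b"
  shows "card {f::'a\<Rightarrow>'c::finite. f a = f b} * CARD('c) = CARD('a\<Rightarrow>'c)"
proof -
  have "bij_betw (\<lambda>(f,c). f(b:=c)) ({f::'a\<Rightarrow>'c. f a = f b} \<times> UNIV) UNIV"
  proof (rule bij_betw_byWitness[where f'="\<lambda>g. (g(b:=g a), g b)"])
    show "\<forall>x\<in>{f::'a\<Rightarrow>'c. f a = f b} \<times> UNIV. (\<lambda>g. (g(b := g a), g b)) ((\<lambda>(f, c). f(b := c)) x) = x"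
      using assms by (auto simp: fun_eq_iff)
    show "\<forall>y\<in>UNIV. (\<lambda>(f, c). f(b := c)) ((\<lambda>g. (g(b := g a), g b)) y) = y" by auto
    show "(\<lambda>(f, c). f(b := c)) ` ({f. f a = f b} \<times> UNIV) \<subseteq> UNIV" by auto
    show "(\<lambda>g. (g(b := g a), g b)) ` UNIV \<subseteq> {f. f a = f b} \<times> UNIV" using assms by auto
  qed
  then have "card ({f::'a\<Rightarrow>'c. f a = f b} \<times> (UNIV::'c set)) = CARD('a\<Rightarrow>'c)"
    by (rule bij_betw_same_card)
  then show ?thesis by (simp add: card_cartesian_product)
qed

lemma pair_prob_sum:
  fixes P :: "'a::finite pmf" and U :: "'b pmf"
  assumes fin: "finite (set_pmf U)"
  shows "measure_pmf.prob (pair_pmf P U) E =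
     (\<Sum>u\<in>set_pmf U. pmf U u * (\<Sum>a\<in>UNIV. pmf P a * (if (a,u)\<in>E then 1 else 0)))"
proof -
  let ?S = "UNIV \<times> set_pmf U"
  have sub: "set_pmf (pair_pmf P U) \<subseteq> ?S" by auto
  have "measure_pmf.prob (pair_pmf P U) E = measure_pmf.prob (pair_pmf P U) (E \<inter> set_pmf (pair_pmf P U))"
    by (rule measure_Int_set_pmf[symmetric])
  also have "E \<inter> set_pmf (pair_pmf P U) = (E \<inter> ?S) \<inter> set_pmf (pair_pmf P U)" using sub by auto
  also have "measure_pmf.prob (pair_pmf P U) \<dots> = measure_pmf.prob (pair_pmf P U) (E \<inter> ?S)"
    by (rule measure_Int_set_pmf)
  also have "\<dots> = (\<Sum>z\<in>E \<inter> ?S. pmf (pair_pmf P U) z)"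
    using fin by (intro measure_measure_pmf_finite) auto
  also have "\<dots> = (\<Sum>z\<in>?S. if z \<in> E then pmf (pair_pmf P U) z else 0)"
  proof -
    have "E \<inter> ?S = ?S \<inter> {z. z \<in> E}" by auto
    then show ?thesis using fin by (simp only: sum.inter_restrict finite_SigmaI finite mem_Collect_eq)
  qed
  also have "\<dots> = (\<Sum>a\<in>UNIV. \<Sum>u\<in>set_pmf U. if (a,u) \<in> E then pmf P a * pmf U u else 0)"
    by (simp add: sum.cartesian_product split_beta, rule sum.cong, auto simp: pmf_pair[symmetric])
  also have "\<dots> = (\<Sum>u\<in>set_pmf U. \<Sum>a\<in>UNIV. if (a,u) \<in> E then pmf P a * pmf U u else 0)"
    by (rule sum.swap)
  also have "\<dots> = (\<Sum>u\<in>set_pmf U. pmf U u * (\<Sum>a\<in>UNIV. pmf P a * (if (a,u)\<in>E then 1 else 0)))"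
    by (simp add: sum_distrib_left mult_ac if_distrib cong: if_cong)
  finally show ?thesis .
qed

lemma prob_fin:
  "measure_pmf.prob (P::'a::finite pmf) A = (\<Sum>a\<in>UNIV. pmf P a * (if a\<in>A then 1 else 0))"
proof -
  have "measure_pmf.prob P A = sum (pmf P) A" by (rule measure_measure_pmf_finite) simp
  also have "A = UNIV \<inter> {a. a \<in> A}" by auto
  also have "sum (pmf P) (UNIV \<inter> {a. a \<in> A}) = (\<Sum>a\<in>UNIV. if a \<in> A then pmf P a else 0)"
    by (simp only: sum.inter_restrict finite mem_Collect_eq)
  finally show ?thesis by (simp add: if_distrib cong: if_cong)
qed

lemma log_mono_nat: "n \<le> m \<Longrightarrow> 0 < m \<Longrightarrow> log 2 (real n) \<le> log 2 (real m)"
  by (cases "n = 0") (auto simp: log_def intro!: divide_right_mono)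

lemma INF_nat_le: "Q0 \<in> S \<Longrightarrow> (INF Q\<in>S. (f Q :: nat)) \<le> f Q0"
  by (rule cINF_lower) (auto intro: bdd_belowI[of _ 0])

lemma good_u:
  fixes P :: "('x::finite \<times> 'y::finite) pmf"
  assumes "in_Lambda P eps eX eY U"
  shows "\<exists>u g. (\<Sum>xy\<in>UNIV. pmf P xy * (if g (eX (fst xy) u) (eY (snd xy) u) u \<noteq> xy then 1 else 0)) \<le> eps"
proof -
  from assms obtain g where fin: "finite (set_pmf U)" and
    pr: "measure_pmf.prob (pair_pmf P U) {((x, y), u). g (eX x u) (eY y u) u \<noteq> (x, y)} \<le> eps"
    unfolding in_Lambda_def by blast
  define err where "err u = (\<Sum>xy\<in>UNIV. pmf P xy * (if g (eX (fst xy) u) (eY (snd xy) u) u \<noteq> xy then 1 else 0))" for u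
  have eq: "measure_pmf.prob (pair_pmf P U) {((x, y), u). g (eX x u) (eY y u) u \<noteq> (x, y)}
      = (\<Sum>u\<in>set_pmf U. pmf U u * err u)"
    unfolding pair_prob_sum[OF fin] err_def by (auto intro!: sum.cong simp: split_beta)
  show ?thesis
  proof (rule ccontr)
    assume "\<not> ?thesis"
    then have gt: "\<And>u. err u > eps" unfolding err_def by (auto simp: not_le)
    have "eps = (\<Sum>u\<in>set_pmf U. pmf U u * eps)"
      using sum_pmf_eq_1[OF fin, of U] by (simp add: sum_distrib_right[symmetric])
    also have "\<dots> < (\<Sum>u\<in>set_pmf U. pmf U u * err u)"
      using fin set_pmf_not_empty[of U] gt
      by (intro sum_strict_mono) (auto simp: pmf_positive)
    finally show False using pr eq by linarith
  qed
qed

lemma lb1: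
  fixes P :: "('x::finite \<times> 'y::finite) pmf" and eX :: "'x \<Rightarrow> 'cx::finite" and eY :: "'y \<Rightarrow> 'cy"
    and g :: "'cx \<Rightarrow> 'cy \<Rightarrow> 'x \<times> 'y"
  assumes err: "(\<Sum>xy\<in>UNIV. pmf P xy * (if g (eX (fst xy)) (eY (snd xy)) \<noteq> xy then 1 else 0)) \<le> eps"
  shows "H0_cond_smooth P eps \<le> log 2 (real CARD('cx))"
proof -
  define h where "h = (\<lambda>xy::'x\<times>'y. (xy, (fst (g (eX (fst xy)) (eY (snd xy))), snd xy)))"
  define Q where "Q = map_pmf h P"
  have "map_pmf fst Q = P" unfolding Q_def h_def by (simp add: pmf.map_comp o_def)
  moreover have "measure_pmf.prob Q {z. fst z \<noteq> snd z} \<le> eps"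
  proof -
    have "measure_pmf.prob Q {z. fst z \<noteq> snd z} = measure_pmf.prob P (h -` {z. fst z \<noteq> snd z})"
      unfolding Q_def by simp
    also have "\<dots> = (\<Sum>xy\<in>UNIV. pmf P xy * (if xy \<in> h -` {z. fst z \<noteq> snd z} then 1 else 0))"
      by (rule prob_fin)
    also have "\<dots> \<le> (\<Sum>xy\<in>UNIV. pmf P xy * (if g (eX (fst xy)) (eY (snd xy)) \<noteq> xy then 1 else 0))"
      by (intro sum_mono mult_left_mono) (auto simp: h_def prod_eq_iff)
    finally show ?thesis using err by linarith
  qed
  ultimately have QS: "Q \<in> smooth_couplings P eps" unfolding smooth_couplings_def by blast
  have "Max ((\<lambda>y. card {x. pmf (map_pmf snd Q) (x, y) > 0}) ` UNIV) \<le> CARD('cx)"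
  proof (rule Max.boundedI)
    fix k assume "k \<in> (\<lambda>y. card {x. pmf (map_pmf snd Q) (x, y) > 0}) ` UNIV"
    then obtain y where k: "k = card {x. pmf (map_pmf snd Q) (x, y) > 0}" by blast
    have "{x. pmf (map_pmf snd Q) (x, y) > 0} \<subseteq> (\<lambda>c. fst (g c (eY y))) ` UNIV"
    proof
      fix x assume "x \<in> {x. pmf (map_pmf snd Q) (x, y) > 0}"
      then have "(x,y) \<in> set_pmf (map_pmf snd Q)" by (simp add: set_pmf_eq)
      then show "x \<in> (\<lambda>c. fst (g c (eY y))) ` UNIV" unfolding Q_def h_def by auto
    qed
    then have "card {x. pmf (map_pmf snd Q) (x, y) > 0} \<le> card ((\<lambda>c. fst (g c (eY y))) ` (UNIV::'cx set))"
      by (intro card_mono) auto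
    also have "\<dots> \<le> CARD('cx)" by (rule card_image_le) simp
    finally show "k \<le> CARD('cx)" using k by simp
  qed simp_all
  then have "(INF Q\<in>smooth_couplings P eps. Max ((\<lambda>y. card {x. pmf (map_pmf snd Q) (x, y) > 0}) ` UNIV)) \<le> CARD('cx)"
    using INF_nat_le[OF QS, of "\<lambda>Q. Max ((\<lambda>y. card {x. pmf (map_pmf snd Q) (x, y) > 0}) ` UNIV)"] by linarith
  then show ?thesis unfolding H0_cond_smooth_def by (intro log_mono_nat) auto
qed

lemma lb2:
  fixes P :: "('x::finite \<times> 'y::finite) pmf" and eX :: "'x \<Rightarrow> 'cx::finite" and eY :: "'y \<Rightarrow> 'cy::finite"
    and g :: "'cx \<Rightarrow> 'cy \<Rightarrow> 'x \<times> 'y"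
  assumes err: "(\<Sum>xy\<in>UNIV. pmf P xy * (if g (eX (fst xy)) (eY (snd xy)) \<noteq> xy then 1 else 0)) \<le> eps"
  shows "H0_cond_smooth (map_pmf prod.swap P) eps \<le> log 2 (real CARD('cy))"
proof -
  define h where "h = (\<lambda>xy::'x\<times>'y. (prod.swap xy, (snd (g (eX (fst xy)) (eY (snd xy))), fst xy)))"
  define Q where "Q = map_pmf h P"
  have "map_pmf fst Q = map_pmf prod.swap P" unfolding Q_def h_def by (simp add: pmf.map_comp o_def)
  moreover have "measure_pmf.prob Q {z. fst z \<noteq> snd z} \<le> eps"
  proof -
    have "measure_pmf.prob Q {z. fst z \<noteq> snd z} = measure_pmf.prob P (h -` {z. fst z \<noteq> snd z})"
      unfolding Q_def by simp
    also have "\<dots> = (\<Sum>xy\<in>UNIV. pmf P xy * (if xy \<in> h -` {z. fst z \<noteq> snd z} then 1 else 0))"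
      by (rule prob_fin)
    also have "\<dots> \<le> (\<Sum>xy\<in>UNIV. pmf P xy * (if g (eX (fst xy)) (eY (snd xy)) \<noteq> xy then 1 else 0))"
      by (intro sum_mono mult_left_mono) (auto simp: h_def prod_eq_iff)
    finally show ?thesis using err by linarith
  qed
  ultimately have QS: "Q \<in> smooth_couplings (map_pmf prod.swap P) eps" unfolding smooth_couplings_def by blast
  have "Max ((\<lambda>x. card {y. pmf (map_pmf snd Q) (y, x) > 0}) ` UNIV) \<le> CARD('cy)"
  proof (rule Max.boundedI)
    fix k assume "k \<in> (\<lambda>x. card {y. pmf (map_pmf snd Q) (y, x) > 0}) ` UNIV"
    then obtain x where k: "k = card {y. pmf (map_pmf snd Q) (y, x) > 0}" by blast
    have "{y. pmf (map_pmf snd Q) (y, x) > 0} \<subseteq> (\<lambda>c. snd (g (eX x) c)) ` UNIV"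
    proof
      fix y assume "y \<in> {y. pmf (map_pmf snd Q) (y, x) > 0}"
      then have "(y,x) \<in> set_pmf (map_pmf snd Q)" by (simp add: set_pmf_eq)
      then show "y \<in> (\<lambda>c. snd (g (eX x) c)) ` UNIV" unfolding Q_def h_def by auto
    qed
    then have "card {y. pmf (map_pmf snd Q) (y, x) > 0} \<le> card ((\<lambda>c. snd (g (eX x) c)) ` (UNIV::'cy set))"
      by (intro card_mono) auto
    also have "\<dots> \<le> CARD('cy)" by (rule card_image_le) simp
    finally show "k \<le> CARD('cy)" using k by simp
  qed simp_all
  then have "(INF Q\<in>smooth_couplings (map_pmf prod.swap P) eps. Max ((\<lambda>x. card {y. pmf (map_pmf snd Q) (y, x) > 0}) ` UNIV)) \<le> CARD('cy)"
    using INF_nat_le[OF QS, of "\<lambda>Q. Max ((\<lambda>x. card {y. pmf (map_pmf snd Q) (y, x) > 0}) ` UNIV)"] by linarith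
  then show ?thesis unfolding H0_cond_smooth_def by (intro log_mono_nat) auto
qed

lemma lb3:
  fixes P :: "('x::finite \<times> 'y::finite) pmf" and eX :: "'x \<Rightarrow> 'cx::finite" and eY :: "'y \<Rightarrow> 'cy::finite"
    and g :: "'cx \<Rightarrow> 'cy \<Rightarrow> 'x \<times> 'y"
  assumes err: "(\<Sum>xy\<in>UNIV. pmf P xy * (if g (eX (fst xy)) (eY (snd xy)) \<noteq> xy then 1 else 0)) \<le> eps"
  shows "H0_smooth P eps \<le> log 2 (real CARD('cx)) + log 2 (real CARD('cy))"
proof -
  define h where "h = (\<lambda>xy::'x\<times>'y. (xy, g (eX (fst xy)) (eY (snd xy))))"
  define Q where "Q = map_pmf h P"
  have "map_pmf fst Q = P" unfolding Q_def h_def by (simp add: pmf.map_comp o_def)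
  moreover have "measure_pmf.prob Q {z. fst z \<noteq> snd z} \<le> eps"
  proof -
    have "measure_pmf.prob Q {z. fst z \<noteq> snd z} = measure_pmf.prob P (h -` {z. fst z \<noteq> snd z})"
      unfolding Q_def by simp
    also have "\<dots> = (\<Sum>xy\<in>UNIV. pmf P xy * (if xy \<in> h -` {z. fst z \<noteq> snd z} then 1 else 0))"
      by (rule prob_fin)
    also have "\<dots> \<le> (\<Sum>xy\<in>UNIV. pmf P xy * (if g (eX (fst xy)) (eY (snd xy)) \<noteq> xy then 1 else 0))"
      by (intro sum_mono mult_left_mono) (auto simp: h_def prod_eq_iff)
    finally show ?thesis using err by linarith
  qed
  ultimately have QS: "Q \<in> smooth_couplings P eps" unfolding smooth_couplings_def by blast
  have "set_pmf (map_pmf snd Q) \<subseteq> (\<lambda>(c,c'). g c c') ` UNIV"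
    unfolding Q_def h_def by (auto intro!: image_eqI[where x="(eX _, eY _)"])
  then have "card (set_pmf (map_pmf snd Q)) \<le> card ((\<lambda>(c,c'). g c c') ` (UNIV::('cx\<times>'cy) set))"
    by (intro card_mono) auto
  also have "\<dots> \<le> CARD('cx\<times>'cy)" by (rule card_image_le) simp
  also have "\<dots> = CARD('cx) * CARD('cy)" by (metis UNIV_Times_UNIV card_cartesian_product)
  finally have "(INF Q\<in>smooth_couplings P eps. card (set_pmf (map_pmf snd Q))) \<le> CARD('cx) * CARD('cy)"
    using INF_nat_le[OF QS, of "\<lambda>Q. card (set_pmf (map_pmf snd Q))"] by linarith
  then have "H0_smooth P eps \<le> log 2 (real (CARD('cx) * CARD('cy)))"
    unfolding H0_smooth_def by (intro log_mono_nat) auto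
  also have "\<dots> = log 2 (real CARD('cx)) + log 2 (real CARD('cy))"
    by (simp add: log_mult)
  finally show ?thesis .
qed



lemma sum_ind_card: "finite A \<Longrightarrow> (\<Sum>f\<in>A. if Q f then 1 else 0) = real (card {f\<in>A. Q f})"
  by (simp add: sum.If_cases Int_def conj_commute)

lemma card_coll_real:
  fixes a b :: "'a::finite"
  shows "real (card {f::'a\<Rightarrow>'c::finite. f a = f b}) =
         (if a = b then 1 else 1 / real CARD('c)) * real CARD('a\<Rightarrow>'c)"
proof (cases "a = b")
  case True then show ?thesis by simp
next
  case False
  have "real (card {f::'a\<Rightarrow>'c. f a = f b}) * real CARD('c) = real CARD('a\<Rightarrow>'c)"
    using card_coll[OF False, where 'c='c] by (metis of_nat_mult)
  then show ?thesis using False by (simp add: field_simps)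
qed

lemma binning:
  fixes P :: "('x::finite \<times> 'y::finite) pmf" and T :: "('x\<times>'y) set"
  assumes h0: "measure_pmf.prob P (-T) \<le> e0"
    and h1: "\<And>y. real (card {p\<in>T. snd p = y}) \<le> e1 * real CARD('cx::finite)"
    and h2: "\<And>x. real (card {p\<in>T. fst p = x}) \<le> e2 * real CARD('cy::finite)"
    and h3: "real (card T) \<le> e3 * (real CARD('cx) * real CARD('cy))"
    and hs: "e0 + e1 + e2 + e3 \<le> eps"
  shows "\<exists>(fX::'x\<Rightarrow>'cx) (fY::'y\<Rightarrow>'cy) g.
     (\<Sum>xy\<in>UNIV. pmf P xy * (if g (fX (fst xy)) (fY (snd xy)) \<noteq> xy then 1 else 0)) \<le> eps"
proof -
  define Ex where "Ex = real CARD('cx)"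
  define Ey where "Ey = real CARD('cy)"
  have Ex1: "Ex \<ge> 1" unfolding Ex_def by (simp add: Suc_leI)
  have Ey1: "Ey \<ge> 1" unfolding Ey_def by (simp add: Suc_leI)
  define N where "N = real CARD(('x\<Rightarrow>'cx)\<times>('y\<Rightarrow>'cy))"
  have NXY: "N = real CARD('x\<Rightarrow>'cx) * real CARD('y\<Rightarrow>'cy)"
    unfolding N_def by (metis UNIV_Times_UNIV card_cartesian_product of_nat_mult)
  have Npos: "N > 0" unfolding N_def by simp
  define G where "G f cx cy = (SOME p. p\<in>T \<and> fst f (fst p) = cx \<and> snd f (snd p) = cy)"
    for f :: "('x\<Rightarrow>'cx)\<times>('y\<Rightarrow>'cy)" and cx cy
  define coll where "coll f xy p = (fst f (fst p) = fst f (fst xy) \<and> snd f (snd p) = snd f (snd xy))"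
    for f :: "('x\<Rightarrow>'cx)\<times>('y\<Rightarrow>'cy)" and xy p :: "'x\<times>'y"
  define ind :: "bool \<Rightarrow> real" where "ind b = (if b then 1 else 0)" for b
  define fail where "fail f xy = (G f (fst f (fst xy)) (snd f (snd xy)) \<noteq> xy)"
    for f :: "('x\<Rightarrow>'cx)\<times>('y\<Rightarrow>'cy)" and xy
  define err where "err f = (\<Sum>xy\<in>UNIV. pmf P xy * ind (fail f xy))" for f
  define c where "c xy p = (if fst p = fst xy then 1 else 1/Ex) * (if snd p = snd xy then 1 else 1/Ey)"
    for xy p :: "'x\<times>'y"
  define e where "e = e1 + e2 + e3"
  have ind01: "0 \<le> ind b" "ind b \<le> 1" for b unfolding ind_def by auto
  have pt: "ind (fail f xy) \<le> ind (xy \<notin> T) + (\<Sum>p\<in>T-{xy}. ind (coll f xy p))" for f xy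
  proof (cases "xy \<in> T")
    case False then show ?thesis using ind01 by (simp add: ind_def sum_nonneg)
  next
    case True
    show ?thesis
    proof (cases "\<exists>p\<in>T-{xy}. coll f xy p")
      case True
      then obtain p where "p\<in>T-{xy}" "coll f xy p" by blast
      then have "ind (coll f xy p) \<le> (\<Sum>p\<in>T-{xy}. ind (coll f xy p))"
        by (intro member_le_sum) (auto simp: ind_def)
      then have "1 \<le> (\<Sum>p\<in>T-{xy}. ind (coll f xy p))"
        using \<open>coll f xy p\<close> by (simp add: ind_def)
      then show ?thesis using ind01[of "fail f xy"] ind01[of "xy \<notin> T"] by linarith
    next
      case False
      have "G f (fst f (fst xy)) (snd f (snd xy)) = xy"
        unfolding G_def
      proof (rule some_equality)
        show "xy \<in> T \<and> fst f (fst xy) = fst f (fst xy) \<and> snd f (snd xy) = snd f (snd xy)"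
          using \<open>xy \<in> T\<close> by simp
        fix p assume "p \<in> T \<and> fst f (fst p) = fst f (fst xy) \<and> snd f (snd p) = snd f (snd xy)"
        then show "p = xy" using False unfolding coll_def by blast
      qed
      then show ?thesis unfolding fail_def using ind01 by (simp add: ind_def sum_nonneg)
    qed
  qed
  have cnt: "real (card {f. coll f xy p}) = N * c xy p" for xy p
  proof -
    have "{f. coll f xy p} = {fX::'x\<Rightarrow>'cx. fX (fst p) = fX (fst xy)} \<times> {fY::'y\<Rightarrow>'cy. fY (snd p) = fY (snd xy)}"
      unfolding coll_def by auto
    then have "real (card {f. coll f xy p}) = real (card {fX::'x\<Rightarrow>'cx. fX (fst p) = fX (fst xy)})
        * real (card {fY::'y\<Rightarrow>'cy. fY (snd p) = fY (snd xy)})"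
      by (simp add: card_cartesian_product)
    also have "\<dots> = N * c xy p"
      unfolding card_coll_real NXY c_def Ex_def Ey_def by (auto simp: field_simps)
    finally show ?thesis .
  qed
  have sumf: "(\<Sum>f\<in>UNIV. ind (fail f xy)) \<le> N * ind (xy \<notin> T) + (\<Sum>p\<in>T-{xy}. N * c xy p)" for xy
  proof -
    have "(\<Sum>f\<in>UNIV. ind (fail f xy)) \<le> (\<Sum>f\<in>UNIV. ind (xy \<notin> T) + (\<Sum>p\<in>T-{xy}. ind (coll f xy p)))"
      by (rule sum_mono) (rule pt)
    also have "\<dots> = N * ind (xy \<notin> T) + (\<Sum>p\<in>T-{xy}. \<Sum>f\<in>UNIV. ind (coll f xy p))"
      using sum.swap[where g="\<lambda>f p. ind (coll f xy p)" and A=UNIV and B="T-{xy}"]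
      by (simp only: sum.distrib) (simp add: N_def)
    also have "(\<Sum>p\<in>T-{xy}. \<Sum>f\<in>UNIV. ind (coll f xy p)) = (\<Sum>p\<in>T-{xy}. N * c xy p)"
      by (rule sum.cong) (simp_all add: ind_def sum_ind_card cnt)
    finally show ?thesis .
  qed
  have cb: "c xy p \<le> ind (snd p = snd xy) / Ex + ind (fst p = fst xy) / Ey + 1 / (Ex * Ey)"
    if "p \<noteq> xy" for xy p
  proof -
    have a: "0 \<le> 1/Ex" "0 \<le> 1/Ey" "0 \<le> 1/(Ex*Ey)" using Ex1 Ey1 by auto
    show ?thesis
      using that a unfolding c_def ind_def by (auto simp: prod_eq_iff)
  qed
  have sumc: "(\<Sum>p\<in>T-{xy}. c xy p) \<le> e" for xy
  proof -
    have "(\<Sum>p\<in>T-{xy}. c xy p) \<le> (\<Sum>p\<in>T-{xy}. ind (snd p = snd xy) / Ex + ind (fst p = fst xy) / Ey + 1 / (Ex * Ey))"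
      by (rule sum_mono) (use cb in auto)
    also have "\<dots> \<le> (\<Sum>p\<in>T. ind (snd p = snd xy) / Ex + ind (fst p = fst xy) / Ey + 1 / (Ex * Ey))"
      using Ex1 Ey1 ind01 by (intro sum_mono2) (auto intro!: add_nonneg_nonneg)
    also have "\<dots> = real (card {p\<in>T. snd p = snd xy}) / Ex + real (card {p\<in>T. fst p = fst xy}) / Ey
         + real (card T) / (Ex * Ey)"
      by (simp add: sum.distrib sum_divide_distrib[symmetric] ind_def sum_ind_card)
    also have "\<dots> \<le> e1 + e2 + e3"
    proof -
      have "real (card {p\<in>T. snd p = snd xy}) / Ex \<le> e1"
        using h1[of "snd xy"] Ex1 unfolding Ex_def by (simp add: divide_le_eq)
      moreover have "real (card {p\<in>T. fst p = fst xy}) / Ey \<le> e2"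
        using h2[of "fst xy"] Ey1 unfolding Ey_def by (simp add: divide_le_eq)
      moreover have "real (card T) / (Ex * Ey) \<le> e3"
        using h3 Ex1 Ey1 unfolding Ex_def Ey_def by (simp add: divide_le_eq)
      ultimately show ?thesis by linarith
    qed
    finally show ?thesis unfolding e_def .
  qed
  have sumf2: "(\<Sum>f\<in>UNIV. ind (fail f xy)) \<le> N * (ind (xy \<notin> T) + e)" for xy
  proof -
    have "(\<Sum>p\<in>T-{xy}. N * c xy p) = N * (\<Sum>p\<in>T-{xy}. c xy p)" by (simp add: sum_distrib_left)
    also have "\<dots> \<le> N * e" using sumc[of xy] Npos by (simp add: mult_left_mono)
    finally show ?thesis using sumf[of xy] by (simp add: distrib_left)
  qed
  have total: "(\<Sum>f\<in>UNIV. err f) \<le> N * eps"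
  proof -
    have "(\<Sum>f\<in>UNIV. err f) = (\<Sum>xy\<in>UNIV. pmf P xy * (\<Sum>f\<in>UNIV. ind (fail f xy)))"
      unfolding err_def
      using sum.swap[where g="\<lambda>f xy. pmf P xy * ind (fail f xy)" and A=UNIV and B=UNIV]
      by (simp add: sum_distrib_left)
    also have "\<dots> \<le> (\<Sum>xy\<in>UNIV. pmf P xy * (N * (ind (xy \<notin> T) + e)))"
      by (intro sum_mono mult_left_mono sumf2) simp
    also have "\<dots> = N * ((\<Sum>xy\<in>UNIV. pmf P xy * ind (xy \<in> -T)) + e * (\<Sum>xy\<in>UNIV. pmf P xy))"
      by (simp add: sum_distrib_left sum.distrib algebra_simps)
    also have "(\<Sum>xy\<in>UNIV. pmf P xy * ind (xy \<in> -T)) = measure_pmf.prob P (-T)"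
      unfolding prob_fin ind_def ..
    also have "(\<Sum>xy\<in>UNIV. pmf P xy) = 1" by (rule sum_pmf_eq_1) auto
    also have "N * (measure_pmf.prob P (-T) + e * 1) \<le> N * eps"
      using h0 hs Npos unfolding e_def by (intro mult_left_mono) auto
    finally show ?thesis .
  qed
  obtain f where f: "err f \<le> eps"
  proof (rule ccontr)
    assume "\<not> thesis"
    then have "\<And>f. err f > eps" using that by (meson not_le)
    then have "(\<Sum>f\<in>(UNIV::(('x\<Rightarrow>'cx)\<times>('y\<Rightarrow>'cy)) set). eps) < (\<Sum>f\<in>UNIV. err f)"
      by (intro sum_strict_mono) auto
    then show False using total unfolding N_def by simp
  qed
  show ?thesis
    by (rule exI[of _ "fst f"], rule exI[of _ "snd f"], rule exI[of _ "G f"])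
       (use f in \<open>simp add: err_def fail_def ind_def\<close>)
qed



lemma card_bound:
  fixes P :: "'a::finite pmf"
  assumes "\<And>p. p\<in>A \<Longrightarrow> pmf P p \<ge> 2 powr (-M)" "measure_pmf.prob P A \<le> B"
  shows "real (card A) \<le> B * 2 powr M"
proof -
  have "real (card A) * 2 powr (-M) = (\<Sum>p\<in>A. 2 powr (-M))" by simp
  also have "\<dots> \<le> (\<Sum>p\<in>A. pmf P p)" by (rule sum_mono) (rule assms(1))
  also have "\<dots> = measure_pmf.prob P A" by (rule measure_measure_pmf_finite[symmetric]) simp
  also have "\<dots> \<le> B" by (rule assms(2))
  finally have "real (card A) * 2 powr (-M) * 2 powr M \<le> B * 2 powr M"
    by (intro mult_right_mono) auto
  then show ?thesis by (simp add: mult.assoc powr_add[symmetric])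
qed

lemma from_log:
  assumes "log 2 n \<ge> K - log 2 e" "e > 0" "n > 0"
  shows "2 powr K \<le> e * n"
proof -
  have "K \<le> log 2 (e * n)" using assms by (simp add: log_mult)
  then have "2 powr K \<le> 2 powr (log 2 (e * n))" by simp
  also have "\<dots> = e * n" using assms by simp
  finally show ?thesis .
qed

lemma typ_lower:
  assumes "w \<in> typ_set p d" shows "pmf p w \<ge> 2 powr (- Xi_max p d)"
proof -
  from assms have pos: "pmf p w > 0" and le: "- log 2 (pmf p w) \<le> Xi_max p d" by (auto simp: typ_set_def)
  have "2 powr (- Xi_max p d) \<le> 2 powr (log 2 (pmf p w))" using le by simp
  also have "\<dots> = pmf p w" using pos by simp
  finally show ?thesis .
qed

lemma typ_upper:
  assumes "w \<in> typ_set p d" shows "pmf p w \<le> 2 powr (- Xi_min p d)"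
proof -
  from assms have pos: "pmf p w > 0" and le: "Xi_min p d \<le> - log 2 (pmf p w)" by (auto simp: typ_set_def)
  have "pmf p w = 2 powr (log 2 (pmf p w))" using pos by simp
  also have "\<dots> \<le> 2 powr (- Xi_min p d)" using le by simp
  finally show ?thesis .
qed

lemma achiev:
  fixes P :: "('x::finite \<times> 'y::finite) pmf" and eps eps0 eps1 eps2 eps3 d :: real
  assumes pos: "eps1 > 0" "eps2 > 0" "eps3 > 0" and hs: "eps0 + eps1 + eps2 + eps3 \<le> eps"
    and h0: "measure_pmf.prob P (- typ_set_joint P d) \<le> eps0"
    and l1: "log 2 (real CARD('cx::finite)) \<ge> Xi_max P d - Xi_min (map_pmf snd P) d - log 2 eps1"
    and l2: "log 2 (real CARD('cy::finite)) \<ge> Xi_max P d - Xi_min (map_pmf fst P) d - log 2 eps2"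
    and l3: "log 2 (real CARD('cx)) + log 2 (real CARD('cy)) \<ge> Xi_max P d - log 2 eps3"
  shows "\<exists>(eX :: 'x \<Rightarrow> nat \<Rightarrow> 'cx) (eY :: 'y \<Rightarrow> nat \<Rightarrow> 'cy) U. in_Lambda P eps eX eY U"
proof -
  define T where "T = typ_set_joint P d"
  define M where "M = Xi_max P d"
  have Tl: "pmf P p \<ge> 2 powr (-M)" if "p \<in> T" for p
    using that unfolding T_def M_def typ_set_joint_def by (auto intro: typ_lower)
  have h1: "real (card {p\<in>T. snd p = y}) \<le> eps1 * real CARD('cx)" for y
  proof (cases "{p\<in>T. snd p = y} = {}")
    case True then show ?thesis unfolding True using pos by simp
  next
    case False
    then obtain p0 where p0: "p0 \<in> T" "snd p0 = y" by blast
    have "y \<in> typ_set (map_pmf snd P) d" using p0 unfolding T_def typ_set_joint_def by auto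
    then have up: "pmf (map_pmf snd P) y \<le> 2 powr (- Xi_min (map_pmf snd P) d)" by (rule typ_upper)
    have "measure_pmf.prob P {p\<in>T. snd p = y} \<le> measure_pmf.prob P (snd -` {y})"
      by (rule measure_pmf.finite_measure_mono) auto
    also have "\<dots> = pmf (map_pmf snd P) y" by (simp add: pmf_map)
    finally have "measure_pmf.prob P {p\<in>T. snd p = y} \<le> 2 powr (- Xi_min (map_pmf snd P) d)"
      using up by linarith
    then have "real (card {p\<in>T. snd p = y}) \<le> 2 powr (- Xi_min (map_pmf snd P) d) * 2 powr M"
      by (intro card_bound[where P=P]) (auto intro: Tl)
    also have "\<dots> = 2 powr (M - Xi_min (map_pmf snd P) d)" by (simp add: powr_add[symmetric])
    also have "\<dots> \<le> eps1 * real CARD('cx)"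
      using l1 pos unfolding M_def by (intro from_log) auto
    finally show ?thesis .
  qed
  have h2: "real (card {p\<in>T. fst p = x}) \<le> eps2 * real CARD('cy)" for x
  proof (cases "{p\<in>T. fst p = x} = {}")
    case True then show ?thesis unfolding True using pos by simp
  next
    case False
    then obtain p0 where p0: "p0 \<in> T" "fst p0 = x" by blast
    have "x \<in> typ_set (map_pmf fst P) d" using p0 unfolding T_def typ_set_joint_def by auto
    then have up: "pmf (map_pmf fst P) x \<le> 2 powr (- Xi_min (map_pmf fst P) d)" by (rule typ_upper)
    have "measure_pmf.prob P {p\<in>T. fst p = x} \<le> measure_pmf.prob P (fst -` {x})"
      by (rule measure_pmf.finite_measure_mono) auto
    also have "\<dots> = pmf (map_pmf fst P) x" by (simp add: pmf_map)
    finally have "measure_pmf.prob P {p\<in>T. fst p = x} \<le> 2 powr (- Xi_min (map_pmf fst P) d)"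
      using up by linarith
    then have "real (card {p\<in>T. fst p = x}) \<le> 2 powr (- Xi_min (map_pmf fst P) d) * 2 powr M"
      by (intro card_bound[where P=P]) (auto intro: Tl)
    also have "\<dots> = 2 powr (M - Xi_min (map_pmf fst P) d)" by (simp add: powr_add[symmetric])
    also have "\<dots> \<le> eps2 * real CARD('cy)"
      using l2 pos unfolding M_def by (intro from_log) auto
    finally show ?thesis .
  qed
  have h3: "real (card T) \<le> eps3 * (real CARD('cx) * real CARD('cy))"
  proof -
    have "real (card T) \<le> 1 * 2 powr M"
      by (intro card_bound[where P=P]) (auto intro: Tl)
    also have "\<dots> \<le> eps3 * (real CARD('cx) * real CARD('cy))"
    proof -
      have "log 2 (real CARD('cx) * real CARD('cy)) = log 2 (real CARD('cx)) + log 2 (real CARD('cy))"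
        by (simp add: log_mult)
      then have "2 powr M \<le> eps3 * (real CARD('cx) * real CARD('cy))"
        using l3 pos unfolding M_def by (intro from_log) auto
      then show ?thesis by simp
    qed
    finally show ?thesis .
  qed
  obtain fX :: "'x \<Rightarrow> 'cx" and fY :: "'y \<Rightarrow> 'cy" and g where
    err: "(\<Sum>xy\<in>UNIV. pmf P xy * (if g (fX (fst xy)) (fY (snd xy)) \<noteq> xy then 1 else 0)) \<le> eps"
    using binning[OF _ h1 h2 h3 hs, of P] h0 unfolding T_def by blast
  have "in_Lambda P eps (\<lambda>x u. fX x) (\<lambda>y u. fY y) (return_pmf 0)"
    unfolding in_Lambda_def
  proof (intro conjI exI[of _ "\<lambda>a b u. g a b"])
    show "finite (set_pmf (return_pmf (0::nat)))" by simp
    show "measure_pmf.prob (pair_pmf P (return_pmf 0))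
      {((x, y), u). g (fX x) (fY y) \<noteq> (x, y)} \<le> eps"
      using err by (subst pair_prob_sum) (auto simp: split_beta)
  qed
  then show ?thesis by blast
qed

theorem theorem1:
  fixes P :: "('x::finite \<times> 'y::finite) pmf"
    and eps eps0 eps1 eps2 eps3 :: real
  assumes "eps > 0" "eps0 > 0" "eps1 > 0" "eps2 > 0" "eps3 > 0"
    and "eps0 + eps1 + eps2 + eps3 \<le> eps"
  shows "(\<forall>(eX :: 'x \<Rightarrow> nat \<Rightarrow> 'cx::finite) (eY :: 'y \<Rightarrow> nat \<Rightarrow> 'cy::finite) U.
            in_Lambda P eps eX eY U \<longrightarrow>
              log 2 (real CARD('cx)) \<ge> H0_cond_smooth P eps
            \<and> log 2 (real CARD('cy)) \<ge> H0_cond_smooth (map_pmf prod.swap P) eps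
            \<and> log 2 (real CARD('cx)) + log 2 (real CARD('cy)) \<ge> H0_smooth P eps)
       \<and> (\<forall>d::real. d \<ge> 0 \<longrightarrow>
            measure_pmf.prob P (- typ_set_joint P d) \<le> eps0 \<longrightarrow>
            log 2 (real CARD('cx)) \<ge> Xi_max P d - Xi_min (map_pmf snd P) d - log 2 eps1 \<longrightarrow>
            log 2 (real CARD('cy)) \<ge> Xi_max P d - Xi_min (map_pmf fst P) d - log 2 eps2 \<longrightarrow>
            log 2 (real CARD('cx)) + log 2 (real CARD('cy)) \<ge> Xi_max P d - log 2 eps3 \<longrightarrow>
            (\<exists>(eX :: 'x \<Rightarrow> nat \<Rightarrow> 'cx) (eY :: 'y \<Rightarrow> nat \<Rightarrow> 'cy) U. in_Lambda P eps eX eY U))"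
  proof (intro conjI allI impI)
  fix eX :: "'x \<Rightarrow> nat \<Rightarrow> 'cx" and eY :: "'y \<Rightarrow> nat \<Rightarrow> 'cy" and U
  assume "in_Lambda P eps eX eY U"
  then obtain u g where err: "(\<Sum>xy\<in>UNIV. pmf P xy * (if g (eX (fst xy) u) (eY (snd xy) u) u \<noteq> xy then 1 else 0)) \<le> eps"
    using good_u by blast
  show "log 2 (real CARD('cx)) \<ge> H0_cond_smooth P eps"
    using lb1[where P=P and eX="\<lambda>x. eX x u" and eY="\<lambda>y. eY y u" and g="\<lambda>a b. g a b u"] err by simp
  show "log 2 (real CARD('cy)) \<ge> H0_cond_smooth (map_pmf prod.swap P) eps"
    using lb2[where P=P and eX="\<lambda>x. eX x u" and eY="\<lambda>y. eY y u" and g="\<lambda>a b. g a b u"] err by simp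
  show "log 2 (real CARD('cx)) + log 2 (real CARD('cy)) \<ge> H0_smooth P eps"
    using lb3[where P=P and eX="\<lambda>x. eX x u" and eY="\<lambda>y. eY y u" and g="\<lambda>a b. g a b u"] err by simp
next
  fix d :: real
  assume A: "d \<ge> 0" "measure_pmf.prob P (- typ_set_joint P d) \<le> eps0"
    "log 2 (real CARD('cx)) \<ge> Xi_max P d - Xi_min (map_pmf snd P) d - log 2 eps1"
    "log 2 (real CARD('cy)) \<ge> Xi_max P d - Xi_min (map_pmf fst P) d - log 2 eps2"
    "log 2 (real CARD('cx)) + log 2 (real CARD('cy)) \<ge> Xi_max P d - log 2 eps3"
  show "\<exists>(eX :: 'x \<Rightarrow> nat \<Rightarrow> 'cx) (eY :: 'y \<Rightarrow> nat \<Rightarrow> 'cy) U. in_Lambda P eps eX eY U"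
    by (rule achiev[OF assms(3) assms(4) assms(5) assms(6) A(2) A(3) A(4) A(5)])
qed

end
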